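(* Assume that $p_t\geq 1/2$ for all integers $t\geq 1$. Then $\tilde c_t\leq 1/2\leq c_t$ holds for all integers $t\geq 1$.
   Context: $s(n)$ denotes the binary sum of digits of $n\ge0$. For $t\ge0$, $c_t$ (resp. $\tilde c_t$) is the asymptotic density of $\{n\ge0: s(n+t)\ge s(n)\}$ (resp. $\{n\ge 0: s(n+t)>s(n)\}$). Define numbers $\varphi(k,t)$ for $k\in\mathbb{Z}$ and integers $t\ge1$ by $\varphi(0,1)=1$, $\varphi(k,1)=0$ for $k\neq0$, and for $t\ge1$: $\varphi(k,2t)=\varphi(k,t)$, $\varphi(k,2t+1)=\frac12\varphi(k-1,t)+\frac12\varphi(k+1,t+1)$. Set $p_t=\sum_{k\geq 0}\varphi(k,t)$ (a finite sum, since $\varphi(k,t)=0$ for $k\ge s(t)$). *)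

theory Defs
  imports Complex_Main
begin

fun bsum :: "nat \<Rightarrow> nat" where
  "bsum n = (if n = 0 then 0 else n mod 2 + bsum (n div 2))"

definition c :: "nat \<Rightarrow> real" where
  "c t = lim (\<lambda>N. real (card {n. n < N \<and> bsum (n + t) \<ge> bsum n}) / real N)"

definition ctilde :: "nat \<Rightarrow> real" where
  "ctilde t = lim (\<lambda>N. real (card {n. n < N \<and> bsum (n + t) > bsum n}) / real N)"

text \<open>phi(k,t) for integers k and t >= 1 (the value at t = 0 is irrelevant and set to 0).\<close>
function phi :: "int \<Rightarrow> nat \<Rightarrow> real" where
  "phi k t =
     (if t = 0 then 0
      else if t = 1 then (if k = 0 then 1 else 0)
      else if even t then phi k (t div 2)
      else phi (k - 1) (t div 2) / 2 + phi (k + 1) (t div 2 + 1) / 2)"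
  by pat_completeness auto
termination
  by (relation "measure snd") (auto elim!: oddE)

definition p :: "nat \<Rightarrow> real" where
  "p t = (\<Sum>k. phi (int k) t)"

end

theory Submission
  imports Defs
begin


declare bsum.simps[simp del] phi.simps[simp del]

lemma bsum_eq: "bsum n = n mod 2 + bsum (n div 2)"
  by (cases "n = 0") (simp_all add: bsum.simps[of n] bsum.simps[of 0])

lemma bsum_0[simp]: "bsum 0 = 0"
  by (simp add: bsum.simps)

lemma bsum_double[simp]: "bsum (2*x) = bsum x"
  using bsum_eq[of "2*x"] by simp

lemma bsum_double1[simp]: "bsum (2*x+1) = bsum x + 1"
  using bsum_eq[of "2*x+1"] by simp

lemma bsum_Suc_double[simp]: "bsum (Suc (2*x)) = Suc (bsum x)"
  using bsum_double1[of x] by simp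

lemma bsum_double'[simp]: "bsum (x*2) = bsum x"
  using bsum_double[of x] by (simp add: mult.commute)

lemma bsum_block: "r < 2^M \<Longrightarrow> bsum (q*2^M + r) = bsum q + bsum r"
proof (induction M arbitrary: q r)
  case 0 then show ?case by simp
next
  case (Suc M)
  have e: "q*2^Suc M + r = 2*(q*2^M + r div 2) + r mod 2" by simp
  have "r div 2 < 2^M" using Suc.prems by simp
  then have "bsum (q*2^M + r div 2) = bsum q + bsum (r div 2)" using Suc.IH by blast
  moreover have "bsum (2*(q*2^M + r div 2) + r mod 2) = bsum (q*2^M + r div 2) + r mod 2"
    using bsum_eq[of "2*(q*2^M + r div 2) + r mod 2"] by simp
  moreover have "q * (2 * 2 ^ M) + r = r + 2 * (q * 2 ^ M)" by simp
  ultimately show ?case using bsum_eq[of r] by (simp add: ac_simps)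
qed

lemma bsum_le: "x < 2^M \<Longrightarrow> bsum x \<le> M"
proof (induction M arbitrary: x)
  case 0 then show ?case by simp
next
  case (Suc M)
  have "x div 2 < 2^M" using Suc.prems by simp
  then have "bsum (x div 2) \<le> M" using Suc.IH by blast
  then show ?case using bsum_eq[of x] by simp
qed

lemma phi_1: "phi k 1 = (if k = 0 then 1 else 0)"
  by (subst phi.simps) simp

lemma phi_1': "phi k (Suc 0) = (if k = 0 then 1 else 0)"
  using phi_1 by simp

lemma phi_even: "t > 0 \<Longrightarrow> phi k (2*t) = phi k t"
  by (subst phi.simps) simp

lemma phi_odd: "t > 0 \<Longrightarrow> phi k (2*t+1) = phi (k-1) t / 2 + phi (k+1) (t+1) / 2"
  by (subst phi.simps) simp

definition D :: "nat \<Rightarrow> nat \<Rightarrow> nat \<Rightarrow> int" where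
  "D t M r = int (bsum ((r + t) mod 2^M)) - int (bsum r)"

definition cnt :: "int \<Rightarrow> nat \<Rightarrow> nat \<Rightarrow> nat" where
  "cnt k t M = card {r. r < 2^M \<and> D t M r = k}"

lemma card_split2:
  fixes Q :: "nat \<Rightarrow> bool"
  shows "card {r. r < 2^Suc M \<and> Q r} = card {r. r < 2^M \<and> Q (2*r)} + card {r. r < 2^M \<and> Q (2*r+1)}"
proof -
  have "{r. r < 2^Suc M \<and> Q r} = (\<lambda>r. 2*r) ` {r. r < 2^M \<and> Q (2*r)} \<union> (\<lambda>r. 2*r+1) ` {r. r < 2^M \<and> Q (2*r+1)}"
  proof (rule set_eqI, rule iffI)
    fix x :: nat assume x: "x \<in> {r. r < 2^Suc M \<and> Q r}"
    show "x \<in> (\<lambda>r. 2*r) ` {r. r < 2^M \<and> Q (2*r)} \<union> (\<lambda>r. 2*r+1) ` {r. r < 2^M \<and> Q (2*r+1)}"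
    proof (cases "even x")
      case True then obtain y where "x = 2*y" by blast
      then show ?thesis using x by auto
    next
      case False then obtain y where "x = 2*y+1" using oddE by blast
      then show ?thesis using x by auto
    qed
  qed auto
  moreover have "card ((\<lambda>r. 2*r) ` {r. r < 2^M \<and> Q (2*r)} \<union> (\<lambda>r. 2*r+1) ` {r. r < 2^M \<and> Q (2*r+1)})
     = card ((\<lambda>r. 2*r) ` {r. r < 2^M \<and> Q (2*r)}) + card ((\<lambda>r. 2*r+1) ` {r. r < 2^M \<and> Q (2*r+1)})"
    by (rule card_Un_disjoint) (auto, presburger)
  moreover have "card ((\<lambda>r. 2*r) ` {r. r < 2^M \<and> Q (2*r)}) = card {r. r < 2^M \<and> Q (2*r)}"
    by (rule card_image) (auto simp: inj_on_def)
  moreover have "card ((\<lambda>r. 2*r+1) ` {r. r < 2^M \<and> Q (2*r+1)}) = card {r. r < 2^M \<and> Q (2*r+1)}"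
    by (rule card_image) (auto simp: inj_on_def)
  ultimately show ?thesis by simp
qed

lemma mod_double: "(2*a) mod (2*b) = 2*(a mod b)" for a b :: nat
  by simp

lemma mod_double1: "(2*a+1) mod (2*b) = 2*(a mod b) + 1" for a b :: nat
  using mod_mult2_eq[of "2*a+1" 2 b] by simp

lemma D_even_even: "D (2*t) (Suc M) (2*r) = D t M r"
  unfolding D_def using mod_double[of "r+t" "2^M"] by (simp add: algebra_simps)

lemma D_even_odd: "D (2*t) (Suc M) (Suc (2*r)) = D t M r"
proof -
  have "2*r+1+2*t = 2*(r+t)+1" by simp
  then show ?thesis unfolding D_def using mod_double1[of "r+t" "2^M"] by simp
qed

lemma D_odd_even: "D (Suc (2*t)) (Suc M) (2*r) = D t M r + 1"
proof -
  have "2*r+(2*t+1) = 2*(r+t)+1" by simp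
  then show ?thesis unfolding D_def using mod_double1[of "r+t" "2^M"] by simp
qed

lemma D_odd_odd: "D (Suc (2*t)) (Suc M) (Suc (2*r)) = D (Suc t) M r - 1"
proof -
  have "2*r+1+(2*t+1) = 2*(r+(t+1))" by simp
  then show ?thesis unfolding D_def using mod_double[of "r+(t+1)" "2^M"] by simp
qed

lemma cnt_even: "cnt k (2*t) (Suc M) = 2 * cnt k t M"
  unfolding cnt_def by (subst card_split2) (simp add: D_even_even D_even_odd)

lemma cnt_odd: "cnt k (2*t+1) (Suc M) = cnt (k-1) t M + cnt (k+1) (t+1) M"
proof -
  have "cnt k (2*t+1) (Suc M) = card {r. r < 2^M \<and> D t M r + 1 = k} + card {r. r < 2^M \<and> D (t+1) M r - 1 = k}"
    unfolding cnt_def by (subst card_split2) (simp add: D_odd_even D_odd_odd)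
  moreover have "{r. r < 2^M \<and> D t M r + 1 = k} = {r. r < 2^M \<and> D t M r = k - 1}" by auto
  moreover have "{r. r < 2^M \<and> D (t+1) M r - 1 = k} = {r. r < 2^M \<and> D (t+1) M r = k + 1}" by auto
  ultimately show ?thesis unfolding cnt_def by simp
qed

lemma phi_cnt: "t \<le> 2^M \<Longrightarrow> phi k (2^M + t) = real (cnt k t M) / 2^M"
proof (induction M arbitrary: t k)
  case 0
  have c: "cnt k t 0 = (if k = 0 then 1 else 0)"
    proof -
    have "{r::nat. r < 2^0 \<and> D t 0 r = k} = (if k = 0 then {0} else {})"
      unfolding D_def by auto
    then show ?thesis unfolding cnt_def by simp
  qed
  from 0 have "t = 0 \<or> t = 1" by auto
  then show ?case
  proof
    assume "t = 0" then show ?thesis using c by (simp add: phi_1 phi_1')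
  next
    assume t1: "t = 1"
    have "phi k (2^0 + t) = phi k (2*1)" using t1 by (simp add: numeral_2_eq_2)
    also have "\<dots> = phi k 1" by (rule phi_even) simp
    finally show ?thesis using c t1 by (simp add: phi_1 phi_1')
  qed
next
  case (Suc M)
  show ?case
  proof (cases "even t")
    case True
    then obtain t' where t': "t = 2*t'" by blast
    with Suc.prems have le: "t' \<le> 2^M" by simp
    have "phi k (2^Suc M + t) = phi k (2*(2^M + t'))" using t' by simp
    also have "\<dots> = phi k (2^M + t')" by (rule phi_even) simp
    also have "\<dots> = real (cnt k t' M) / 2^M" using Suc.IH le by blast
    also have "\<dots> = real (cnt k t (Suc M)) / 2^Suc M" using t' cnt_even by simp
    finally show ?thesis .
  next
    case False
    then obtain t' where t': "t = 2*t'+1" using oddE by blast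
    with Suc.prems have le: "t' < 2^M" by simp
    have "phi k (2^Suc M + t) = phi k (2*(2^M + t')+1)" using t' by simp
    also have "\<dots> = phi (k-1) (2^M + t') / 2 + phi (k+1) (2^M + t' + 1) / 2" by (rule phi_odd) simp
    also have "\<dots> = real (cnt (k-1) t' M) / 2^M / 2 + real (cnt (k+1) (t'+1) M) / 2^M / 2"
      using Suc.IH[of t' "k-1"] Suc.IH[of "t'+1" "k+1"] le by (simp add: add.assoc)
    also have "\<dots> = real (cnt k t (Suc M)) / 2^Suc M" using t' cnt_odd by (simp add: add_divide_distrib)
    finally show ?thesis .
  qed
qed

lemma D_le: "D t M r \<le> int M"
proof -
  have "(r + t) mod 2^M < 2^M" by simp
  then have "bsum ((r + t) mod 2^M) \<le> M" by (rule bsum_le)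
  then show ?thesis unfolding D_def by simp
qed

lemma cnt_partial: "(\<Sum>k<j. cnt (int k) t M) = card {r. r < 2^M \<and> 0 \<le> D t M r \<and> D t M r < int j}"
proof (induction j)
  case 0 then show ?case by simp
next
  case (Suc j)
  have "{r. r < 2^M \<and> 0 \<le> D t M r \<and> D t M r < int (Suc j)} =
        {r. r < 2^M \<and> 0 \<le> D t M r \<and> D t M r < int j} \<union> {r. r < 2^M \<and> D t M r = int j}"
    by auto
  moreover have "card ({r. r < 2^M \<and> 0 \<le> D t M r \<and> D t M r < int j} \<union> {r. r < 2^M \<and> D t M r = int j})
     = card {r. r < 2^M \<and> 0 \<le> D t M r \<and> D t M r < int j} + card {r. r < 2^M \<and> D t M r = int j}"
    by (rule card_Un_disjoint) auto
  ultimately show ?case using Suc.IH unfolding cnt_def by simp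
qed

lemma p_count: "t \<le> 2^M \<Longrightarrow> p (2^M + t) * 2^M = real (card {r. r < 2^M \<and> bsum r \<le> bsum ((r + t) mod 2^M)})"
proof -
  assume t: "t \<le> 2^M"
  have z: "phi (int k) (2^M + t) = 0" if "k \<notin> {..<Suc M}" for k
  proof -
    have "D t M r \<noteq> int k" for r using D_le[of t M r] that by simp
    then have "{r. r < 2^M \<and> D t M r = int k} = {}" by auto
    then show ?thesis using phi_cnt[OF t] unfolding cnt_def by simp
  qed
  have 1: "p (2^M + t) = (\<Sum>k<Suc M. phi (int k) (2^M + t))"
    unfolding p_def by (rule suminf_finite) (use z in auto)
  have 2: "(\<Sum>k<Suc M. phi (int k) (2^M + t)) = (\<Sum>k<Suc M. real (cnt (int k) t M)) / 2^M"
    unfolding sum_divide_distrib by (intro sum.cong refl phi_cnt[OF t])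
  have 3: "(\<Sum>k<Suc M. real (cnt (int k) t M)) = real (card {r. r < 2^M \<and> 0 \<le> D t M r \<and> D t M r < int (Suc M)})"
    using cnt_partial[where j="Suc M" and t=t and M=M] by (simp only: of_nat_sum[symmetric])
  have 4: "{r. r < 2^M \<and> 0 \<le> D t M r \<and> D t M r < int (Suc M)} = {r. r < 2^M \<and> bsum r \<le> bsum ((r + t) mod 2^M)}"
  proof -
    have "D t M r < int (Suc M)" for r using D_le[of t M r] by simp
    then show ?thesis unfolding D_def by auto
  qed
  show ?thesis unfolding 1 2 3 4 by simp
qed



lemma block_one:
  fixes P G :: "nat \<Rightarrow> bool"
  assumes agree: "\<And>r. r < K \<Longrightarrow> r + T < K \<Longrightarrow> P r = G r"
  shows "card {r. r < K \<and> P r} \<le> card {r. r < K \<and> G r} + T"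
proof -
  have "{r. r < K \<and> P r} \<subseteq> {r. r < K \<and> G r} \<union> {K-T..<K}" using agree by force
  then have "card {r. r < K \<and> P r} \<le> card ({r. r < K \<and> G r} \<union> {K-T..<K})"
    by (intro card_mono) auto
  also have "\<dots> \<le> card {r. r < K \<and> G r} + card {K-T..<K}" by (rule card_Un_le)
  also have "card {K-T..<K} \<le> T" by simp
  finally show ?thesis by simp
qed

lemma block_Q:
  fixes P G :: "nat \<Rightarrow> bool"
  assumes agree: "\<And>q r. r < K \<Longrightarrow> r + T < K \<Longrightarrow> P (q*K + r) = G r"
  shows "card {n. n < Q*K \<and> P n} \<le> Q * (card {r. r < K \<and> G r} + T) \<and>
         Q * card {r. r < K \<and> G r} \<le> card {n. n < Q*K \<and> P n} + Q * T"
proof (induction Q)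
  case 0 then show ?case by simp
next
  case (Suc Q)
  have e: "{n. n < Suc Q*K \<and> P n} = {n. n < Q*K \<and> P n} \<union> (\<lambda>r. Q*K + r) ` {r. r < K \<and> P (Q*K + r)}"
  proof (rule set_eqI, rule iffI)
    fix x assume x: "x \<in> {n. n < Suc Q*K \<and> P n}"
    show "x \<in> {n. n < Q*K \<and> P n} \<union> (\<lambda>r. Q*K + r) ` {r. r < K \<and> P (Q*K + r)}"
    proof (cases "x < Q*K")
      case True then show ?thesis using x by auto
    next
      case False
      then have "x = Q*K + (x - Q*K)" by simp
      moreover have "x - Q*K < K" using x False by (simp add: less_diff_conv2)
      ultimately show ?thesis using x by (metis (mono_tags, lifting) UnI2 image_eqI mem_Collect_eq)
    qed
  qed auto
  have c: "card {n. n < Suc Q*K \<and> P n} = card {n. n < Q*K \<and> P n} + card {r. r < K \<and> P (Q*K + r)}"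
    unfolding e by (subst card_Un_disjoint) (auto simp: card_image inj_on_def)
  have b1: "card {r. r < K \<and> P (Q*K + r)} \<le> card {r. r < K \<and> G r} + T"
    by (rule block_one) (use agree in auto)
  have b2: "card {r. r < K \<and> G r} \<le> card {r. r < K \<and> P (Q*K + r)} + T"
    by (rule block_one) (use agree in auto)
  show ?case using Suc.IH c b1 b2 by (simp add: algebra_simps)
qed

lemma block_N:
  fixes P G :: "nat \<Rightarrow> bool"
  assumes K: "0 < K" and agree: "\<And>q r. r < K \<Longrightarrow> r + T < K \<Longrightarrow> P (q*K + r) = G r"
    and N: "0 < N"
  shows "\<bar>real (card {n. n < N \<and> P n}) / N - real (card {r. r < K \<and> G r}) / K\<bar> \<le> real T / K + real K / N"
proof -
  define Q where "Q = N div K"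
  define c where "c = card {n. n < N \<and> P n}"
  define c0 where "c0 = card {n. n < Q*K \<and> P n}"
  define g where "g = card {r. r < K \<and> G r}"
  have dm: "Q*K + N mod K = N" unfolding Q_def by simp
  have "N mod K < K" using K by simp
  then have QK: "Q*K \<le> N" "N < Q*K + K" using dm by linarith+
  have "c0 \<le> c" unfolding c0_def c_def using QK by (intro card_mono) auto
  have "{n. n < N \<and> P n} \<subseteq> {n. n < Q*K \<and> P n} \<union> {Q*K..<N}" by auto
  then have "c \<le> card ({n. n < Q*K \<and> P n} \<union> {Q*K..<N})" unfolding c_def by (intro card_mono) auto
  also have "\<dots> \<le> c0 + card {Q*K..<N}" unfolding c0_def by (rule card_Un_le)
  finally have "c \<le> c0 + K" using QK by simp
  have g: "g \<le> K"
  proof -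
    have "g \<le> card {..<K}" unfolding g_def by (intro card_mono) auto
    then show ?thesis by simp
  qed
  from block_Q[where P=P and G=G and K=K and T=T and Q=Q, OF agree] have h1: "c0 \<le> Q*(g+T)" and h2: "Q*g \<le> c0 + Q*T"
    unfolding c0_def g_def by auto
  have r1: "real c * K \<le> real N * (g + T) + real K * K"
  proof -
    have "real c \<le> real Q * (g+T) + K" proof -
      have "c \<le> Q*(g+T) + K" using h1 \<open>c \<le> c0 + K\<close> by simp
      then have "real c \<le> real (Q*(g+T) + K)" by (rule of_nat_mono)
      then show ?thesis by simp
    qed
    then have "real c * K \<le> (real Q * (g+T) + K) * K" by (rule mult_right_mono) simp
    then have "real c * K \<le> (real Q * K) * (g+T) + real K * K" by (simp add: algebra_simps)
    moreover have "(real Q * K) * (g+T) \<le> real N * (g+T)"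
      using QK(1) by (intro mult_right_mono) (simp_all add: of_nat_mono[of "Q*K" N, simplified])
    ultimately show ?thesis by linarith
  qed
  have r2: "real N * g \<le> real c * K + real N * T + real K * K"
  proof -
    have a: "real Q * g \<le> real c0 + real Q * T" using h2 by (metis of_nat_add of_nat_mono of_nat_mult)
    have b: "real N * g \<le> (real Q * K + K) * g"
      using QK(2) by (intro mult_right_mono) (simp_all add: of_nat_mono[of "N" "Q*K+K", simplified])
    have "(real Q * K + K) * g = (real Q * g) * K + real K * g" by (simp add: algebra_simps)
    also have "\<dots> \<le> (real c0 + real Q * T) * K + real K * K"
      using a g by (intro add_mono mult_right_mono mult_left_mono) simp_all
    also have "\<dots> \<le> real c * K + real N * T + real K * K"
    proof -
      have "real c0 \<le> real c" using \<open>c0 \<le> c\<close> by simp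
      moreover have "real Q * K \<le> real N" using QK(1) by (metis of_nat_mono of_nat_mult)
      moreover have "real Q * T * K \<le> real N * T"
        using \<open>real Q * K \<le> real N\<close> by (metis mult.commute mult.left_commute mult_right_mono of_nat_0_le_iff)
      moreover have "real c0 * K \<le> real c * K" using \<open>c0 \<le> c\<close> by (intro mult_right_mono) simp_all
      moreover have "(real c0 + real Q * T) * K = real c0 * K + real Q * T * K" by (simp add: algebra_simps)
      ultimately show ?thesis by linarith
    qed
    finally show ?thesis using b by linarith
  qed
  have "\<bar>real c * K - real N * g\<bar> \<le> real N * T + real K * K" using r1 r2 by (simp add: algebra_simps abs_le_iff)
  then have "\<bar>real c * K - real N * g\<bar> / (real N * K) \<le> (real N * T + real K * K) / (real N * K)"
    using K N by (intro divide_right_mono) auto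
  moreover have "\<bar>real c * K - real N * g\<bar> / (real N * K) = \<bar>real c / N - real g / K\<bar>"
    using K N by (simp add: abs_div_pos[symmetric] field_simps)
  moreover have "(real N * T + real K * K) / (real N * K) = real T / K + real K / N"
    using K N by (simp add: field_simps)
  ultimately show ?thesis unfolding c_def g_def by simp
qed



lemma conv_approx:
  fixes x :: "nat \<Rightarrow> real" and Q :: "real \<Rightarrow> bool"
  assumes H: "\<And>e. e > 0 \<Longrightarrow> \<exists>g N0. Q g \<and> (\<forall>N\<ge>N0. \<bar>x N - g\<bar> \<le> e)"
  shows "convergent x \<and> (\<forall>e>0. \<exists>g. Q g \<and> \<bar>lim x - g\<bar> \<le> e)"
proof -
  have "Cauchy x"
  proof (rule metric_CauchyI)
    fix e :: real assume e: "e > 0"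
    obtain g N0 where g: "\<forall>N\<ge>N0. \<bar>x N - g\<bar> \<le> e/3" using H[of "e/3"] e by auto
    show "\<exists>M. \<forall>m\<ge>M. \<forall>n\<ge>M. dist (x m) (x n) < e"
    proof (intro exI allI impI)
      fix m n assume "N0 \<le> m" "N0 \<le> n"
      then have "\<bar>x m - g\<bar> \<le> e/3" "\<bar>x n - g\<bar> \<le> e/3" using g by auto
      then show "dist (x m) (x n) < e" using e unfolding dist_real_def abs_le_iff abs_less_iff by linarith
    qed
  qed
  then have cv: "convergent x" by (simp add: Cauchy_convergent_iff)
  then have L: "x \<longlonglongrightarrow> lim x" by (simp add: convergent_LIMSEQ_iff)
  have "\<exists>g. Q g \<and> \<bar>lim x - g\<bar> \<le> e" if e: "e > 0" for e
  proof -
    obtain g N0 where g: "Q g" "\<forall>N\<ge>N0. \<bar>x N - g\<bar> \<le> e" using H[OF e] by auto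
    have "(\<lambda>N. \<bar>x N - g\<bar>) \<longlonglongrightarrow> \<bar>lim x - g\<bar>" by (intro tendsto_intros L)
    then have "\<bar>lim x - g\<bar> \<le> e" using g(2) by (intro LIMSEQ_le_const2) auto
    then show ?thesis using g(1) by blast
  qed
  then show ?thesis using cv by blast
qed

lemma le_by_eps: "(\<And>e::real. e > 0 \<Longrightarrow> a \<le> b + e) \<Longrightarrow> a \<le> b"
  by (metis field_le_epsilon)



lemma agree_lemma:
  assumes "r < 2^M" "r + t < 2^M" and that: "n = q*2^M + r"
  shows "(bsum n \<le> bsum (n + t) \<longleftrightarrow> bsum r \<le> bsum ((r + t) mod 2^M)) \<and>
         (bsum n < bsum (n + t) \<longleftrightarrow> bsum r < bsum ((r + t) mod 2^M))"
proof -
  have "bsum (n + t) = bsum q + bsum (r + t)" using that assms bsum_block[of "r+t" M q] by (simp add: add.assoc)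
  moreover have "bsum n = bsum q + bsum r" using that assms bsum_block by simp
  moreover have "(r + t) mod 2^M = r + t" using assms by simp
  ultimately show ?thesis by simp
qed

lemma lower_count:
  assumes hyp: "\<forall>t::nat. t \<ge> 1 \<longrightarrow> p t \<ge> 1/2" and t: "t \<le> 2^M"
  shows "real (card {r. r < 2^M \<and> bsum r \<le> bsum ((r + t) mod 2^M)}) / 2^M \<ge> 1/2"
proof -
  have "(1::nat) \<le> 2^M + t" using one_le_power[of "2::nat" M] by linarith
  then have "p (2^M + t) \<ge> 1/2" using hyp by blast
  then have "(2::real)^M * (1/2) \<le> 2^M * p (2^M + t)" by (rule mult_left_mono) simp
  then have "(2::real)^M * (1/2) \<le> real (card {r. r < 2^M \<and> bsum r \<le> bsum ((r + t) mod 2^M)})"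
  proof -
    have "(2::real)^M * p (2^M + t) = real (card {r. r < 2^M \<and> bsum r \<le> bsum ((r + t) mod 2^M)})"
      using p_count[OF t] by (simp only: mult.commute)
    then show ?thesis using \<open>(2::real)^M * (1/2) \<le> 2^M * p (2^M + t)\<close> by linarith
  qed
  then show ?thesis by (simp add: field_simps)
qed

lemma upper_count:
  assumes hyp: "\<forall>t::nat. t \<ge> 1 \<longrightarrow> p t \<ge> 1/2" and t: "t \<le> 2^M"
  shows "real (card {r. r < 2^M \<and> bsum r < bsum ((r + t) mod 2^M)}) / 2^M \<le> 1/2"
proof -
  define K :: nat where "K = 2^M"
  have K: "K > 0" "t \<le> K" using t unfolding K_def by simp_all
  define f where "f m = (m + t) mod K" for m
  have "real (card {r. r < K \<and> bsum r \<le> bsum ((r + (K - t)) mod K)}) / K \<ge> 1/2"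
    using lower_count[OF hyp, of "K - t" M] unfolding K_def by simp
  moreover have "{r. r < K \<and> bsum r \<le> bsum ((r + (K - t)) mod K)} \<subseteq> f ` {m. m < K \<and> bsum (f m) \<le> bsum m}"
  proof
    fix r assume r: "r \<in> {r. r < K \<and> bsum r \<le> bsum ((r + (K - t)) mod K)}"
    define m where "m = (r + (K - t)) mod K"
    have "f m = (r + (K - t) + t) mod K" unfolding f_def m_def by (simp add: mod_add_left_eq)
    also have "r + (K - t) + t = r + K" using K by simp
    finally have fm: "f m = r" using r by simp
    have "m < K" unfolding m_def using K by simp
    moreover have "bsum (f m) \<le> bsum m" using fm r unfolding m_def by simp
    ultimately have "m \<in> {m. m < K \<and> bsum (f m) \<le> bsum m}" by simp
    then show "r \<in> f ` {m. m < K \<and> bsum (f m) \<le> bsum m}" using fm by (metis image_eqI)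
  qed
  then have "card {r. r < K \<and> bsum r \<le> bsum ((r + (K - t)) mod K)} \<le> card {m. m < K \<and> bsum (f m) \<le> bsum m}"
  proof -
    have "finite {m. m < K \<and> bsum (f m) \<le> bsum m}" by simp
    then have "card (f ` {m. m < K \<and> bsum (f m) \<le> bsum m}) \<le> card {m. m < K \<and> bsum (f m) \<le> bsum m}"
      by (rule card_image_le)
    moreover have "card {r. r < K \<and> bsum r \<le> bsum ((r + (K - t)) mod K)} \<le> card (f ` {m. m < K \<and> bsum (f m) \<le> bsum m})"
      by (rule card_mono) (use \<open>_ \<subseteq> _\<close> in auto)
    ultimately show ?thesis by linarith
  qed
  ultimately have a: "real (card {m. m < K \<and> bsum (f m) \<le> bsum m}) / K \<ge> 1/2"
  proof -
    assume h1: "1/2 \<le> real (card {r. r < K \<and> bsum r \<le> bsum ((r + (K - t)) mod K)}) / real K"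
      and h2: "card {r. r < K \<and> bsum r \<le> bsum ((r + (K - t)) mod K)} \<le> card {m. m < K \<and> bsum (f m) \<le> bsum m}"
    from h2 have "real (card {r. r < K \<and> bsum r \<le> bsum ((r + (K - t)) mod K)}) / real K \<le> real (card {m. m < K \<and> bsum (f m) \<le> bsum m}) / real K"
      by (intro divide_right_mono) simp_all
    then show ?thesis using h1 by linarith
  qed
  have "{..<K} = {m. m < K \<and> bsum m < bsum (f m)} \<union> {m. m < K \<and> bsum (f m) \<le> bsum m}" by auto
  then have "K = card {m. m < K \<and> bsum m < bsum (f m)} + card {m. m < K \<and> bsum (f m) \<le> bsum m}"
  proof -
    have "card {..<K} = card ({m. m < K \<and> bsum m < bsum (f m)} \<union> {m. m < K \<and> bsum (f m) \<le> bsum m})"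
      using \<open>{..<K} = _\<close> by simp
    also have "\<dots> = card {m. m < K \<and> bsum m < bsum (f m)} + card {m. m < K \<and> bsum (f m) \<le> bsum m}"
      by (rule card_Un_disjoint) auto
    finally show ?thesis by simp
  qed
  then have "real (card {m. m < K \<and> bsum m < bsum (f m)}) = real K - real (card {m. m < K \<and> bsum (f m) \<le> bsum m})"
    by linarith
  then have "real (card {m. m < K \<and> bsum m < bsum (f m)}) / K = 1 - real (card {m. m < K \<and> bsum (f m) \<le> bsum m}) / K"
    using K by (simp add: field_simps)
  then show ?thesis using a unfolding f_def K_def by simp
qed

lemma exists_M:
  fixes t :: nat and e :: real
  assumes "e > 0"
  shows "\<exists>M. t \<le> 2^M \<and> real t / 2^M \<le> e / 2"
proof -
  obtain M where M: "2 * real t / e + real t < 2^M"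
    using real_arch_pow[of 2 "2 * real t / e + real t"] by auto
  have "real t \<le> 2^M" using M assms by (smt (verit) divide_nonneg_pos of_nat_0_le_iff)
  then have "t \<le> 2^M" by (metis of_nat_le_iff of_nat_numeral of_nat_power)
  moreover have "2 * real t / e \<le> 2^M" using M by simp
  then have "2 * real t \<le> 2^M * e" using assms by (simp add: divide_le_eq)
  then have "real t / 2^M \<le> e / 2" by (simp add: field_simps)
  ultimately show ?thesis by blast
qed

lemma main_approx:
  fixes Pn :: "nat \<Rightarrow> nat \<Rightarrow> bool" and Gr :: "nat \<Rightarrow> nat \<Rightarrow> bool" and Q :: "real \<Rightarrow> bool"
  assumes agree: "\<And>M q r. r < 2^M \<Longrightarrow> r + t < 2^M \<Longrightarrow> Pn t (q*2^M + r) = Gr M r"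
    and good: "\<And>M. t \<le> 2^M \<Longrightarrow> Q (real (card {r. r < 2^M \<and> Gr M r}) / 2^M)"
  shows "convergent (\<lambda>N. real (card {n. n < N \<and> Pn t n}) / real N) \<and>
    (\<forall>e>0. \<exists>g. Q g \<and> \<bar>lim (\<lambda>N. real (card {n. n < N \<and> Pn t n}) / real N) - g\<bar> \<le> e)"
proof (rule conv_approx)
  fix e :: real assume e: "e > 0"
  obtain M where M: "t \<le> 2^M" "real t / 2^M \<le> e / 2" using exists_M[OF e] by blast
  define K :: nat where "K = 2^M"
  define g where "g = real (card {r. r < K \<and> Gr M r}) / K"
  define N0 :: nat where "N0 = nat \<lceil>2 * K / e\<rceil> + 1"
  have "\<forall>N\<ge>N0. \<bar>real (card {n. n < N \<and> Pn t n}) / real N - g\<bar> \<le> e"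
  proof (intro allI impI)
    fix N assume N: "N0 \<le> N"
    then have N0: "0 < N" unfolding N0_def by simp
    have "2 * K / e \<le> real N"
    proof -
      have a: "2 * K / e \<le> real (nat \<lceil>2 * K / e\<rceil>)" by (rule real_nat_ceiling_ge)
      have "nat \<lceil>2 * K / e\<rceil> \<le> N" using N unfolding N0_def by linarith
      then have "real (nat \<lceil>2 * K / e\<rceil>) \<le> real N" by (rule of_nat_mono)
      then show ?thesis using a by linarith
    qed
    then have "2 * real K \<le> real N * e" using e by (simp add: divide_le_eq)
    then have kn: "real K / N \<le> e / 2" using N0 e by (simp add: field_simps)
    have "\<bar>real (card {n. n < N \<and> Pn t n}) / N - real (card {r. r < K \<and> Gr M r}) / K\<bar> \<le> real t / K + real K / N"
      by (rule block_N) (use agree N0 in \<open>auto simp: K_def\<close>)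
    then show "\<bar>real (card {n. n < N \<and> Pn t n}) / real N - g\<bar> \<le> e"
    proof -
      have "real t / real K \<le> e / 2" using M(2) by (simp add: K_def)
      then show ?thesis using kn \<open>\<bar>_ - _\<bar> \<le> real t / K + real K / N\<close> unfolding g_def by linarith
    qed
  qed
  moreover have "Q g" using good[OF M(1)] unfolding g_def K_def by simp
  ultimately show "\<exists>g N0. Q g \<and> (\<forall>N\<ge>N0. \<bar>real (card {n. n < N \<and> Pn t n}) / real N - g\<bar> \<le> e)"
    by blast
qed

theorem lemma3p2:
  assumes "\<forall>t::nat. t \<ge> 1 \<longrightarrow> p t \<ge> 1/2"
  shows "\<forall>t::nat. t \<ge> 1 \<longrightarrow> ctilde t \<le> 1/2 \<and> 1/2 \<le> c t"
proof (intro allI impI conjI)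
  fix t :: nat assume t: "t \<ge> 1"
  have A: "convergent (\<lambda>N. real (card {n. n < N \<and> (\<lambda>t n. bsum n \<le> bsum (n + t)) t n}) / real N) \<and>
    (\<forall>e>0. \<exists>g. (\<lambda>g. g \<ge> 1/2) g \<and> \<bar>lim (\<lambda>N. real (card {n. n < N \<and> (\<lambda>t n. bsum n \<le> bsum (n + t)) t n}) / real N) - g\<bar> \<le> e)"
    by (rule main_approx[where Gr = "\<lambda>M r. bsum r \<le> bsum ((r + t) mod 2^M)"])
       (use agree_lemma lower_count[OF assms] in auto)
  have "1/2 \<le> c t"
  proof (rule le_by_eps)
    fix e :: real assume "e > 0"
    then obtain g where "g \<ge> 1/2" "\<bar>c t - g\<bar> \<le> e" using A unfolding c_def by auto
    then show "1/2 \<le> c t + e" by linarith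
  qed
  then show "1/2 \<le> c t" .
  have B: "convergent (\<lambda>N. real (card {n. n < N \<and> (\<lambda>t n. bsum n < bsum (n + t)) t n}) / real N) \<and>
    (\<forall>e>0. \<exists>g. (\<lambda>g. g \<le> 1/2) g \<and> \<bar>lim (\<lambda>N. real (card {n. n < N \<and> (\<lambda>t n. bsum n < bsum (n + t)) t n}) / real N) - g\<bar> \<le> e)"
    by (rule main_approx[where Gr = "\<lambda>M r. bsum r < bsum ((r + t) mod 2^M)"])
       (use agree_lemma upper_count[OF assms] in auto)
  show "ctilde t \<le> 1/2"
  proof (rule le_by_eps)
    fix e :: real assume "e > 0"
    then obtain g where "g \<le> 1/2" "\<bar>ctilde t - g\<bar> \<le> e" using B unfolding ctilde_def by auto
    then show "ctilde t \<le> 1/2 + e" by linarith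
  qed
qed

end
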